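(* Let $n \geq 3$. Then $$\max_{G} T_{\min}(G) = 2n-4 \qquad\text{and}\qquad \max_{G} T_{\max}(G) = \left\lfloor n^2/2 \right\rfloor - 1,$$ where both maxima range over all connected, undirected (simple) graphs $G$ on $n$ vertices.
   Context: Let $G=(V,E)$ be a connected undirected graph with $|V| = n$. An ordering is a bijection $\pi: V \to \{1,\dots,n\}$. For vertices $u,v$, let $d_G(u,v)$ denote the length (number of edges) of a shortest path from $u$ to $v$ in $G$. The communication time of ordering $\pi$ on $G$ is $$T(G,\pi) = \sum_{i=1}^{n-1} d_G\big(\pi^{-1}(i), \pi^{-1}(i+1)\big).$$ Define $T_{\min}(G) = \min_{\pi} T(G,\pi)$ and $T_{\max}(G) = \max_{\pi} T(G,\pi)$, the minimum and maximum over all orderings $\pi$. *)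

theory Defs
  imports Main
begin

definition simple_graph :: "nat \<Rightarrow> (nat \<Rightarrow> nat \<Rightarrow> bool) \<Rightarrow> bool" where
  "simple_graph n E \<longleftrightarrow> (\<forall>u v. E u v \<longrightarrow> E v u) \<and> (\<forall>u. \<not> E u u)
     \<and> (\<forall>u v. E u v \<longrightarrow> u < n \<and> v < n)"

definition is_walk :: "(nat \<Rightarrow> nat \<Rightarrow> bool) \<Rightarrow> nat list \<Rightarrow> nat \<Rightarrow> nat \<Rightarrow> bool" where
  "is_walk E xs u v \<longleftrightarrow> xs \<noteq> [] \<and> hd xs = u \<and> last xs = v
     \<and> (\<forall>i. Suc i < length xs \<longrightarrow> E (xs ! i) (xs ! Suc i))"

definition connected_graph :: "nat \<Rightarrow> (nat \<Rightarrow> nat \<Rightarrow> bool) \<Rightarrow> bool" where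
  "connected_graph n E \<longleftrightarrow> (\<forall>u<n. \<forall>v<n. \<exists>xs. is_walk E xs u v)"

definition gdist :: "(nat \<Rightarrow> nat \<Rightarrow> bool) \<Rightarrow> nat \<Rightarrow> nat \<Rightarrow> nat" where
  "gdist E u v = (LEAST k. \<exists>xs. is_walk E xs u v \<and> length xs = Suc k)"

definition orderings :: "nat \<Rightarrow> (nat \<Rightarrow> nat) set" where
  "orderings n = {\<pi>. bij_betw \<pi> {0..<n} {1..n}}"

definition comm_time :: "nat \<Rightarrow> (nat \<Rightarrow> nat \<Rightarrow> bool) \<Rightarrow> (nat \<Rightarrow> nat) \<Rightarrow> nat" where
  "comm_time n E \<pi> = (\<Sum>i=1..n-1. gdist E (inv_into {0..<n} \<pi> i) (inv_into {0..<n} \<pi> (i+1)))"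

definition T_min :: "nat \<Rightarrow> (nat \<Rightarrow> nat \<Rightarrow> bool) \<Rightarrow> nat" where
  "T_min n E = Min (comm_time n E ` orderings n)"

definition T_max :: "nat \<Rightarrow> (nat \<Rightarrow> nat \<Rightarrow> bool) \<Rightarrow> nat" where
  "T_max n E = Max (comm_time n E ` orderings n)"

definition conn_graphs :: "nat \<Rightarrow> (nat \<Rightarrow> nat \<Rightarrow> bool) set" where
  "conn_graphs n = {E. simple_graph n E \<and> connected_graph n E}"

end

theory Submission
  imports Defs
begin



lemma walk_single: "is_walk E [u] u u"
  by (simp add: is_walk_def)

lemma walk_edge: "E u v \<Longrightarrow> is_walk E [u,v] u v"
  by (auto simp: is_walk_def nth_Cons split: nat.splits)

lemma walk_append:
  assumes "is_walk E xs u v" "is_walk E ys v w"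
  shows "is_walk E (xs @ tl ys) u w"
proof -
  from assms obtain y ys' where ys: "ys = y # ys'" "y = v"
    by (cases ys) (auto simp: is_walk_def)
  have "xs \<noteq> []" "hd xs = u" "last xs = v" using assms(1) by (auto simp: is_walk_def)
  have e1: "\<forall>i. Suc i < length xs \<longrightarrow> E (xs ! i) (xs ! Suc i)" using assms(1) by (auto simp: is_walk_def)
  have e2: "\<forall>i. Suc i < length ys \<longrightarrow> E (ys ! i) (ys ! Suc i)" using assms(2) by (auto simp: is_walk_def)
  have "E ((xs @ ys') ! i) ((xs @ ys') ! Suc i)" if i: "Suc i < length (xs @ ys')" for i
  proof (cases "Suc i < length xs")
    case True thus ?thesis using e1 by (simp add: nth_append)
  next
    case False
    show ?thesis
    proof (cases "i < length xs")
      case True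
      then have "i = length xs - 1" using False by simp
      then have "xs ! i = v" using \<open>last xs = v\<close> \<open>xs \<noteq> []\<close> by (simp add: last_conv_nth)
      moreover have "(xs @ ys') ! Suc i = ys ! Suc 0" using \<open>i = length xs - 1\<close> \<open>xs \<noteq> []\<close> ys
        by (simp add: nth_append)
      moreover have "Suc 0 < length ys" using i \<open>i = length xs - 1\<close> \<open>xs \<noteq> []\<close> ys by simp
      ultimately show ?thesis using e2 True ys by (auto simp: nth_append)
    next
      case F2: False
      define j where "j = i - length xs"
      have "(xs @ ys') ! i = ys ! Suc j" "(xs @ ys') ! Suc i = ys ! Suc (Suc j)"
        using F2 ys by (auto simp: nth_append j_def Suc_diff_le)
      moreover have "Suc (Suc j) < length ys" using i F2 ys by (auto simp: j_def)
      ultimately show ?thesis using e2 by simp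
    qed
  qed
  moreover have "last (xs @ ys') = w"
    using assms(2) ys \<open>last xs = v\<close> by (cases ys') (auto simp: is_walk_def)
  ultimately show ?thesis using \<open>xs \<noteq> []\<close> \<open>hd xs = u\<close> ys by (auto simp: is_walk_def)
qed

lemma walk_rev:
  assumes "\<forall>u v. E u v \<longrightarrow> E v u" "is_walk E xs u v"
  shows "is_walk E (rev xs) v u"
proof -
  have "E (rev xs ! i) (rev xs ! Suc i)" if "Suc i < length xs" for i
  proof -
    have "E (xs ! (length xs - Suc (Suc i))) (xs ! Suc (length xs - Suc (Suc i)))"
      using assms(2) that unfolding is_walk_def by (metis Suc_diff_Suc diff_less zero_less_Suc less_trans_Suc Suc_lessD)
    moreover have "Suc (length xs - Suc (Suc i)) = length xs - Suc i" using that by simp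
    ultimately show ?thesis using assms(1) that by (simp add: rev_nth)
  qed
  then show ?thesis using assms(2) by (auto simp: is_walk_def hd_rev last_rev)
qed

lemma walk_take:
  assumes "is_walk E xs u v" "0 < k" "k \<le> length xs"
  shows "is_walk E (take k xs) u (xs ! (k - 1))"
proof -
  have ne: "take k xs \<noteq> []" using assms by (auto simp: is_walk_def)
  have "last (take k xs) = take k xs ! (k - 1)" using ne assms by (simp add: last_conv_nth min_def)
  also have "\<dots> = xs ! (k - 1)" using assms by simp
  finally show ?thesis using assms ne by (auto simp: is_walk_def hd_take)
qed

lemma gdist_le:
  assumes "is_walk E xs u v" shows "gdist E u v + 1 \<le> length xs"
proof -
  have "xs \<noteq> []" using assms by (simp add: is_walk_def)
  then have "is_walk E xs u v \<and> length xs = Suc (length xs - 1)" using assms by simp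
  then have "gdist E u v \<le> length xs - 1" unfolding gdist_def by (intro Least_le) blast
  then show ?thesis using \<open>xs \<noteq> []\<close> by (cases xs) auto
qed

lemma gdist_ex:
  assumes "is_walk E ys u v" shows "\<exists>xs. is_walk E xs u v \<and> length xs = Suc (gdist E u v)"
proof -
  have "ys \<noteq> []" using assms by (simp add: is_walk_def)
  then have "\<exists>k xs. is_walk E xs u v \<and> length xs = Suc k" using assms
    by (intro exI[of _ "length ys - 1"] exI[of _ ys]) simp
  then show ?thesis unfolding gdist_def by (rule LeastI_ex)
qed




locale cg =
  fixes n :: nat and E :: "nat \<Rightarrow> nat \<Rightarrow> bool"
  assumes sg: "simple_graph n E" and cn: "connected_graph n E"
begin

abbreviation d where "d \<equiv> gdist E"

lemma sym: "E u v \<Longrightarrow> E v u" using sg by (simp add: simple_graph_def)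
lemma edge_lt: "E u v \<Longrightarrow> u < n \<and> v < n" using sg by (simp add: simple_graph_def)
lemma irr: "\<not> E u u" using sg by (simp add: simple_graph_def)

lemma walk_ex: "u < n \<Longrightarrow> v < n \<Longrightarrow> \<exists>xs. is_walk E xs u v"
  using cn by (simp add: connected_graph_def)

lemma short_walk: "u < n \<Longrightarrow> v < n \<Longrightarrow> \<exists>xs. is_walk E xs u v \<and> length xs = Suc (d u v)"
  using walk_ex gdist_ex by blast

lemma d_refl: "d u u = 0"
  using gdist_le[OF walk_single[of E u]] by simp

lemma d_zero: assumes "u < n" "v < n" "d u v = 0" shows "u = v"
proof -
  obtain xs where "is_walk E xs u v" "length xs = 1" using short_walk[OF assms(1,2)] assms(3) by auto
  then show ?thesis by (cases xs) (auto simp: is_walk_def)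
qed

lemma d_pos: "u < n \<Longrightarrow> v < n \<Longrightarrow> u \<noteq> v \<Longrightarrow> d u v \<ge> 1"
  using d_zero by fastforce

lemma d_tri: assumes "u < n" "v < n" "w < n" shows "d u w \<le> d u v + d v w"
proof -
  obtain xs where xs: "is_walk E xs u v" "length xs = Suc (d u v)" using short_walk assms by blast
  obtain ys where ys: "is_walk E ys v w" "length ys = Suc (d v w)" using short_walk assms by blast
  have "d u w + 1 \<le> length (xs @ tl ys)" by (rule gdist_le[OF walk_append[OF xs(1) ys(1)]])
  then show ?thesis using xs ys by simp
qed

lemma d_sym: assumes "u < n" "v < n" shows "d u v = d v u"
proof -
  have *: "d a b \<le> d b a" if ab: "a < n" "b < n" for a b
  proof -
    obtain xs where xs: "is_walk E xs b a" "length xs = Suc (d b a)" using short_walk ab by blast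
    have "d a b + 1 \<le> length (rev xs)"
      by (rule gdist_le[OF walk_rev[OF _ xs(1)]]) (use sym in blast)
    then show ?thesis using xs by simp
  qed
  show ?thesis using *[of u v] *[of v u] assms by simp
qed

lemma d_edge: "E u v \<Longrightarrow> d u v \<le> 1"
  using gdist_le[OF walk_edge[of E u v]] by simp

lemma d_edge1: "E u v \<Longrightarrow> d u v = 1"
  using d_edge[of u v] d_pos[of u v] edge_lt[of u v] irr[of u] by fastforce

lemma d_pred: assumes "u < n" "v < n" "d u v = Suc k"
  shows "\<exists>w<n. E w v \<and> d u w = k"
proof -
  obtain xs where xs: "is_walk E xs u v" "length xs = Suc (Suc k)" using short_walk assms by force
  define w where "w = xs ! k"
  have e: "E w v"
  proof -
    have "E (xs ! k) (xs ! Suc k)" using xs by (simp add: is_walk_def)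
    moreover have "xs ! Suc k = v" using xs by (auto simp: is_walk_def last_conv_nth)
    ultimately show ?thesis by (simp add: w_def)
  qed
  have wn: "w < n" using edge_lt[OF e] by simp
  have "d u w + 1 \<le> length (take (Suc k) xs)"
    using gdist_le[OF walk_take[OF xs(1), of "Suc k"]] xs(2) by (simp add: w_def)
  then have le: "d u w \<le> k" using xs by simp
  have "d u v \<le> d u w + d w v" using d_tri assms wn by blast
  then have "k \<le> d u w" using d_edge[OF e] assms by simp
  then show ?thesis using le e wn by (intro exI[of _ w]) auto
qed

end



lemma level_chain:
  fixes j :: nat
  assumes "\<forall>v\<in>B. 2 \<le> f v \<longrightarrow> (\<exists>w\<in>B. f w + 1 = f v)" "x \<in> B" "\<forall>v\<in>B. 1 \<le> f v"
  shows "j < f x \<Longrightarrow> f x - j \<in> f ` B"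
  proof (induction j)
    case 0 then show ?case using assms(2) by simp
  next
    case (Suc j)
    then have "f x - j \<in> f ` B" by simp
    then obtain v where v: "v \<in> B" "f v = f x - j" by auto
    have "2 \<le> f v" using v Suc.prems by simp
    then obtain w where "w \<in> B" "f w + 1 = f v" using assms(1) v by blast
    then have "f w = f x - Suc j" using v by simp
    then show ?case using \<open>w \<in> B\<close> by (metis image_eqI)
  qed

lemma level_sum:
  assumes "finite B" "\<forall>v\<in>B. 1 \<le> f v" "\<forall>v\<in>B. 2 \<le> f v \<longrightarrow> (\<exists>w\<in>B. f w + 1 = f v)"
  shows "2 * sum f B \<le> card B * (card B + 1)"
  using assms
proof (induction "card B" arbitrary: B)
  case 0 then show ?case by simp
next
  case (Suc k)
  then have ne: "B \<noteq> {}" by auto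
  define M where "M = Max (f ` B)"
  have "M \<in> f ` B" unfolding M_def using Suc.prems ne by simp
  then obtain x where x: "x \<in> B" "f x = M" by auto
  have mx: "\<forall>v\<in>B. f v \<le> f x" using x Suc.prems(1) unfolding M_def by simp
  define B' where "B' = B - {x}"
  have cB': "card B' = k" using Suc.hyps(2) x Suc.prems(1) by (simp add: B'_def)
  have cl: "\<forall>v\<in>B'. 2 \<le> f v \<longrightarrow> (\<exists>w\<in>B'. f w + 1 = f v)"
  proof (intro ballI impI)
    fix v assume "v \<in> B'" "2 \<le> f v"
    then obtain w where "w \<in> B" "f w + 1 = f v" using Suc.prems(3) by (auto simp: B'_def)
    moreover have "w \<noteq> x" using \<open>v \<in> B'\<close> mx \<open>f w + 1 = f v\<close> by (auto simp: B'_def)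
    ultimately show "\<exists>w\<in>B'. f w + 1 = f v" by (auto simp: B'_def)
  qed
  have ih: "2 * sum f B' \<le> k * (k + 1)"
  proof -
    have "2 * sum f B' \<le> card B' * (card B' + 1)"
      using Suc.hyps(1)[OF cB'[symmetric]] Suc.prems cl by (auto simp: B'_def)
    then show ?thesis using cB' by simp
  qed
  have "{1..f x} \<subseteq> f ` B"
  proof
    fix t assume "t \<in> {1..f x}"
    then have "f x - (f x - t) = t" "f x - t < f x" by auto
    then show "t \<in> f ` B" using level_chain[OF Suc.prems(3) x(1) Suc.prems(2)] by metis
  qed
  then have "card {1..f x} \<le> card (f ` B)" using Suc.prems(1) by (intro card_mono) auto
  also have "\<dots> \<le> card B" using Suc.prems(1) by (rule card_image_le)
  finally have fx: "f x \<le> Suc k" using Suc.hyps(2) by simp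
  have "sum f B = f x + sum f B'" using Suc.prems(1) x by (simp add: B'_def sum.remove)
  moreover have "card B = Suc k" using Suc.hyps(2) by simp
  ultimately show ?case using ih fx by (simp add: algebra_simps)
qed

lemma sum_sq_le: "finite N \<Longrightarrow> (\<Sum>u\<in>N. (b u)^2) \<le> (\<Sum>u\<in>N. b u :: nat)^2"
proof (induction N rule: finite_induct)
  case empty then show ?case by simp
next
  case (insert x F)
  then show ?case by (simp add: power2_eq_square algebra_simps)
qed

lemma arith_opt:
  fixes b :: "nat \<Rightarrow> nat"
  assumes fin: "finite N" and s: "(\<Sum>u\<in>N. b u) = n - 1" and n1: "n \<ge> 1"
    and bd: "\<forall>u\<in>N. 2 * b u \<le> n"
  shows "2 * (\<Sum>u\<in>N. b u * (b u + 1)) \<le> n^2"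
proof (cases "\<exists>u0\<in>N. 2 * b u0 = n")
  case False
  then have bd': "\<forall>u\<in>N. 2 * b u \<le> n - 1" using bd by fastforce
  have "2 * (\<Sum>u\<in>N. b u * (b u + 1)) = (\<Sum>u\<in>N. b u * (2 * b u)) + 2 * (\<Sum>u\<in>N. b u)"
    by (simp add: sum_distrib_left sum.distrib algebra_simps)
  also have "(\<Sum>u\<in>N. b u * (2 * b u)) \<le> (\<Sum>u\<in>N. b u * (n - 1))"
    using bd' by (intro sum_mono mult_le_mono2) auto
  also have "\<dots> = (n - 1) * (n - 1)" using s by (simp add: sum_distrib_right[symmetric])
  finally have "2 * (\<Sum>u\<in>N. b u * (b u + 1)) \<le> (n - 1) * (n - 1) + 2 * (n - 1)" using s by simp
  also have "\<dots> \<le> n^2" using n1 by (cases n) (auto simp: power2_eq_square algebra_simps)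
  finally show ?thesis .
next
  case True
  then obtain u0 where u0: "u0 \<in> N" "2 * b u0 = n" by blast
  define c where "c = b u0"
  have c1: "c \<ge> 1" using u0 n1 c_def by auto
  have sr: "(\<Sum>u\<in>N - {u0}. b u) = c - 1"
    using s u0 fin by (simp add: sum.remove c_def)
  have sq: "(\<Sum>u\<in>N - {u0}. (b u)^2) \<le> (c - 1)^2"
    using sum_sq_le[of "N - {u0}" b] fin sr by simp
  have "(\<Sum>u\<in>N. b u * (b u + 1)) = c * (c + 1) + (\<Sum>u\<in>N - {u0}. b u * (b u + 1))"
    using fin u0 by (simp add: sum.remove c_def)
  also have "(\<Sum>u\<in>N - {u0}. b u * (b u + 1)) = (\<Sum>u\<in>N - {u0}. (b u)^2) + (\<Sum>u\<in>N - {u0}. b u)"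
    by (simp add: power2_eq_square sum.distrib[symmetric] algebra_simps)
  finally have "(\<Sum>u\<in>N. b u * (b u + 1)) \<le> c * (c + 1) + (c - 1)^2 + (c - 1)"
    using sq sr by simp
  then have "2 * (\<Sum>u\<in>N. b u * (b u + 1)) \<le> 2 * (c * (c + 1) + (c - 1)^2 + (c - 1))" by simp
  also have "\<dots> = (2 * c)^2" using c1 by (cases c) (auto simp: power2_eq_square algebra_simps)
  finally show ?thesis using u0 c_def by simp
qed




context cg begin

definition sig where "sig r = (\<Sum>v\<in>{0..<n}. d r v)"

lemma closer_bound:
  assumes r: "r < n" and e: "E r u" and mn: "sig r \<le> sig u"
  shows "2 * card {v\<in>{0..<n}. d u v < d r v} \<le> n"
proof -
  define A where "A = {v\<in>{0..<n}. d u v < d r v}"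
  have un: "u < n" using edge_lt[OF e] by simp
  have dru: "d r u = 1" using d_edge1[OF e] .
  have tm: "int (d u v) - int (d r v) \<le> (if v \<in> A then -1 else 1)" if v: "v < n" for v
  proof -
    have "d u v \<le> d u r + d r v" using d_tri un r v by blast
    moreover have "d u r = 1" using dru d_sym un r by simp
    ultimately show ?thesis by (auto simp: A_def v)
  qed
  have "0 \<le> int (sig u) - int (sig r)" using mn by simp
  also have "\<dots> = (\<Sum>v\<in>{0..<n}. int (d u v) - int (d r v))"
    by (simp add: sig_def sum_subtractf)
  also have "\<dots> \<le> (\<Sum>v\<in>{0..<n}. (if v \<in> A then -1 else 1 :: int))"
    using tm by (intro sum_mono) auto
  also have "\<dots> = - int (card A) + int (card ({0..<n} - A))"
  proof -
    have A: "A \<subseteq> {0..<n}" by (auto simp: A_def)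
    have "(\<Sum>v\<in>{0..<n}. (if v \<in> A then -1 else 1 :: int)) =
          (\<Sum>v\<in>A. (if v \<in> A then -1 else 1 :: int)) + (\<Sum>v\<in>{0..<n} - A. (if v \<in> A then -1 else 1 :: int))"
      using A by (metis (no_types, lifting) finite_atLeastLessThan sum.subset_diff add.commute)
    then show ?thesis by simp
  qed
  also have "\<dots> = int n - 2 * int (card A)"
  proof -
    have fA: "finite A" by (simp add: A_def)
    have "card ({0..<n} - A) = card {0..<n} - card A" by (rule card_Diff_subset[OF fA]) (auto simp: A_def)
    have "card A \<le> card {0..<n}" by (rule card_mono) (auto simp: A_def)
    then have "card A \<le> n" by simp
    moreover note \<open>card ({0..<n} - A) = card {0..<n} - card A\<close>
    ultimately show ?thesis by simp
  qed
  finally show ?thesis unfolding A_def by simp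
qed

definition br where "br r v = (LEAST u. E r u \<and> d u v + 1 = d r v)"

lemma br_ex:
  assumes r: "r < n" and v: "v < n" "v \<noteq> r"
  shows "E r (br r v) \<and> d (br r v) v + 1 = d r v"
proof -
  have "d v r \<ge> 1" using d_pos r v by blast
  then obtain k where k: "d v r = Suc k" by (cases "d v r") auto
  obtain w where w: "w < n" "E w r" "d v w = k" using d_pred[OF v(1) r k] by blast
  have "E r w \<and> d w v + 1 = d r v" using w k d_sym[OF v(1) r] d_sym[OF v(1) w(1)] sym by auto
  then show ?thesis unfolding br_def by (rule LeastI)
qed

lemma median_bound:
  assumes r: "r < n" and mn: "\<forall>u<n. sig r \<le> sig u"
  shows "4 * sig r \<le> n^2"
proof -
  define V where "V = {0..<n}"
  define N where "N = {u\<in>V. E r u}"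
  define B where "B u = {v\<in>V - {r}. br r v = u}" for u
  have n1: "n \<ge> 1" using r by simp
  have finN: "finite N" by (simp add: N_def V_def)
  have brN: "br r ` (V - {r}) \<subseteq> N"
  proof
    fix x assume "x \<in> br r ` (V - {r})"
    then obtain v where v0: "v \<in> V - {r}" "x = br r v" by blast
    then have v: "v < n" "v \<noteq> r" "x = br r v" by (auto simp: V_def)
    then have "E r x" using br_ex[OF r] by blast
    then show "x \<in> N" using edge_lt by (auto simp: N_def V_def)
  qed
  have sig1: "sig r = (\<Sum>v\<in>V - {r}. d r v)"
    unfolding sig_def V_def using r d_refl
    by (subst sum.remove[of _ r]) auto
  have sig2: "(\<Sum>v\<in>V - {r}. d r v) = (\<Sum>u\<in>N. \<Sum>v\<in>B u. d r v)"
    unfolding B_def by (rule sum.group[symmetric]) (use finN brN in \<open>auto simp: V_def\<close>)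
  have cs: "(\<Sum>u\<in>N. card (B u)) = n - 1"
  proof -
    have "(\<Sum>u\<in>N. card (B u)) = (\<Sum>u\<in>N. \<Sum>v\<in>B u. (1::nat))" by simp
    also have "\<dots> = (\<Sum>v\<in>V - {r}. (1::nat))"
      unfolding B_def by (rule sum.group) (use finN brN in \<open>auto simp: V_def\<close>)
    also have "\<dots> = n - 1" using r by (simp add: V_def)
    finally show ?thesis .
  qed
  have lvl: "2 * (\<Sum>v\<in>B u. d r v) \<le> card (B u) * (card (B u) + 1)" if u: "u \<in> N" for u
  proof (rule level_sum)
    show "finite (B u)" by (simp add: B_def V_def)
    show "\<forall>v\<in>B u. 1 \<le> d r v" using d_pos r by (auto simp: B_def V_def)
    show "\<forall>v\<in>B u. 2 \<le> d r v \<longrightarrow> (\<exists>w\<in>B u. d r w + 1 = d r v)"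
    proof (intro ballI impI)
      fix v assume vB: "v \<in> B u" and v2: "2 \<le> d r v"
      have vn: "v < n" "v \<noteq> r" and bv: "br r v = u" using vB by (auto simp: B_def V_def)
      have ev: "E r u" "d u v + 1 = d r v" using br_ex[OF r vn] bv by auto
      have un: "u < n" using edge_lt[OF ev(1)] by simp
      obtain k where k: "d u v = Suc k" using ev v2 by (cases "d u v") auto
      obtain w where w: "w < n" "E w v" "d u w = k" using d_pred[OF un vn(1) k] by blast
      have dwv: "d w v = 1" using d_edge1[OF w(2)] .
      have dru: "d r u = 1" using d_edge1[OF ev(1)] .
      have t1: "d r w \<le> d r u + d u w" using d_tri r un w(1) by blast
      have t2: "d r v \<le> d r w + d w v" using d_tri r vn w(1) by blast
      have drw: "d r w + 1 = d r v" using t1 t2 dwv dru k ev w by simp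
      have wr: "w \<noteq> r" using drw v2 d_refl by auto
      have cand_u: "E r u \<and> d u w + 1 = d r w" using ev(1) drw k w(3) ev(2) by simp
      have le1: "br r w \<le> u" unfolding br_def by (rule Least_le) (rule cand_u)
      have gw: "E r (br r w) \<and> d (br r w) w + 1 = d r w" using br_ex[OF r w(1) wr] .
      have gwn: "br r w < n" using edge_lt gw by blast
      have "d (br r w) v \<le> d (br r w) w + d w v" using d_tri gwn w(1) vn by blast
      moreover have "d r v \<le> d r (br r w) + d (br r w) v" using d_tri r gwn vn by blast
      moreover have "d r (br r w) = 1" using d_edge1 gw by blast
      ultimately have "E r (br r w) \<and> d (br r w) v + 1 = d r v" using gw dwv drw by simp
      then have "u \<le> br r w" unfolding bv[symmetric] br_def by (rule Least_le)
      then have "br r w = u" using le1 by simp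
      then have "w \<in> B u" using w wr by (auto simp: B_def V_def)
      then show "\<exists>w\<in>B u. d r w + 1 = d r v" using drw by blast
    qed
  qed
  have bb: "\<forall>u\<in>N. 2 * card (B u) \<le> n"
  proof
    fix u assume u: "u \<in> N"
    then have e: "E r u" and un: "u < n" by (auto simp: N_def V_def)
    have "B u \<subseteq> {v\<in>{0..<n}. d u v < d r v}"
    proof
      fix v assume "v \<in> B u"
      then have "v < n" "v \<noteq> r" "br r v = u" by (auto simp: B_def V_def)
      then show "v \<in> {v\<in>{0..<n}. d u v < d r v}" using br_ex[OF r, of v] by auto
    qed
    then have "card (B u) \<le> card {v\<in>{0..<n}. d u v < d r v}" by (intro card_mono) auto
    then show "2 * card (B u) \<le> n" using closer_bound[OF r e] mn un by force
  qed
  have "2 * sig r \<le> (\<Sum>u\<in>N. card (B u) * (card (B u) + 1))"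
  proof -
    have "2 * sig r = (\<Sum>u\<in>N. 2 * (\<Sum>v\<in>B u. d r v))" unfolding sig1 sig2 by (simp add: sum_distrib_left)
    also have "\<dots> \<le> (\<Sum>u\<in>N. card (B u) * (card (B u) + 1))" using lvl by (intro sum_mono)
    finally show ?thesis .
  qed
  then have "4 * sig r \<le> 2 * (\<Sum>u\<in>N. card (B u) * (card (B u) + 1))" by simp
  also have "\<dots> \<le> n^2" by (rule arith_opt[OF finN cs n1 bb])
  finally show ?thesis .
qed

end



lemma ord_s:
  assumes "\<pi> \<in> orderings n"
  shows "bij_betw (inv_into {0..<n} \<pi>) {1..n} {0..<n}"
  using assms by (simp add: orderings_def bij_betw_inv_into)

lemma comm_time_s:
  "comm_time n E \<pi> = (\<Sum>i=1..n-1. gdist E (inv_into {0..<n} \<pi> i) (inv_into {0..<n} \<pi> (i+1)))"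
  by (simp add: comm_time_def)

lemma sum_split_ends:
  fixes h :: "nat \<Rightarrow> nat"
  assumes "n \<ge> 1"
  shows "(\<Sum>i=1..n-1. h i) + h n = (\<Sum>i=1..n. h i)"
    and "(\<Sum>i=1..n-1. h (i+1)) + h 1 = (\<Sum>i=1..n. h i)"
proof -
  obtain m where m: "n = Suc m" using assms by (cases n) auto
  show "(\<Sum>i=1..n-1. h i) + h n = (\<Sum>i=1..n. h i)" using m by simp
  have "(\<Sum>i=Suc 1..Suc m. h i) = (\<Sum>i=1..m. h (Suc i))" by (rule sum.shift_bounds_cl_Suc_ivl)
  then have "(\<Sum>i=1..n-1. h (i+1)) = (\<Sum>i=Suc 1..Suc m. h i)" using m by simp
  moreover have "(\<Sum>i=1..Suc m. h i) = h 1 + (\<Sum>i=Suc 1..Suc m. h i)"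
    by (simp add: sum.atLeast_Suc_atMost)
  ultimately show "(\<Sum>i=1..n-1. h (i+1)) + h 1 = (\<Sum>i=1..n. h i)" using m by simp
qed

context cg begin

lemma Tmax_bound:
  assumes n2: "n \<ge> 2" and p: "\<pi> \<in> orderings n"
  shows "comm_time n E \<pi> \<le> n^2 div 2 - 1"
proof -
  define V where "V = {0..<n}"
  have "finite (sig ` V)" "sig ` V \<noteq> {}" using n2 by (auto simp: V_def)
  then have "Min (sig ` V) \<in> sig ` V" by (rule Min_in)
  then obtain r where r: "r \<in> V" "sig r = Min (sig ` V)" by auto
  have mn: "\<forall>u<n. sig r \<le> sig u" using r by (auto simp: V_def)
  have rn: "r < n" using r by (simp add: V_def)
  have med: "4 * sig r \<le> n^2" by (rule median_bound[OF rn mn])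
  define s where "s = inv_into {0..<n} \<pi>"
  have bs: "bij_betw s {1..n} {0..<n}" unfolding s_def by (rule ord_s[OF p])
  have sn: "s i < n" if "i \<in> {1..n}" for i using bs that by (auto simp: bij_betw_def)
  define h where "h v = d r v" for v
  have step: "d (s i) (s (i+1)) \<le> h (s i) + h (s (i+1))" if "i \<in> {1..n-1}" for i
  proof -
    have a: "s i < n" "s (i+1) < n" using that sn by auto
    have "d (s i) (s (i+1)) \<le> d (s i) r + d r (s (i+1))" using d_tri a rn by blast
    moreover have "d (s i) r = d r (s i)" using d_sym a rn by blast
    ultimately show ?thesis by (simp add: h_def)
  qed
  have "comm_time n E \<pi> = (\<Sum>i=1..n-1. d (s i) (s (i+1)))" by (simp add: comm_time_def s_def)
  also have "\<dots> \<le> (\<Sum>i=1..n-1. h (s i) + h (s (i+1)))" using step by (intro sum_mono)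
  also have "\<dots> = (\<Sum>i=1..n-1. h (s i)) + (\<Sum>i=1..n-1. h (s (i+1)))" by (simp add: sum.distrib)
  finally have c0: "comm_time n E \<pi> \<le> (\<Sum>i=1..n-1. h (s i)) + (\<Sum>i=1..n-1. h (s (i+1)))" .
  have e1: "(\<Sum>i=1..n-1. h (s i)) + h (s n) = (\<Sum>i=1..n. h (s i))"
    using sum_split_ends(1)[of n "\<lambda>i. h (s i)"] n2 by linarith
  have e2: "(\<Sum>i=1..n-1. h (s (i+1))) + h (s 1) = (\<Sum>i=1..n. h (s i))"
    using sum_split_ends(2)[of n "\<lambda>i. h (s i)"] n2 by linarith
  have c1: "comm_time n E \<pi> + h (s n) + h (s 1) \<le> 2 * (\<Sum>i=1..n. h (s i))"
    using c0 e1 e2 by linarith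
  have "(\<Sum>i=1..n. h (s i)) = (\<Sum>v\<in>{0..<n}. h v)" by (rule sum.reindex_bij_betw[OF bs])
  also have "\<dots> = sig r" by (simp add: sig_def h_def)
  finally have c2: "(\<Sum>i=1..n. h (s i)) = sig r" .
  have "s 1 \<noteq> s n"
  proof
    assume "s 1 = s n"
    moreover have "inj_on s {1..n}" using bs by (simp add: bij_betw_def)
    ultimately have "1 = n" using n2 by (auto dest: inj_onD)
    then show False using n2 by simp
  qed
  moreover have "1 \<in> {1..n}" "n \<in> {1..n}" using n2 by auto
  ultimately have "h (s n) + h (s 1) \<ge> 1"
  proof -
    assume ne: "s 1 \<noteq> s n" and i: "1 \<in> {1..n}" "n \<in> {1..n}"
    show ?thesis
    proof (cases "s 1 = r")
      case True
      then have "s n \<noteq> r" using ne by simp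
      then have "h (s n) \<ge> 1" using d_pos[OF rn sn[OF i(2)]] by (simp add: h_def)
      then show ?thesis by simp
    next
      case False
      then have "h (s 1) \<ge> 1" using d_pos[OF rn sn[OF i(1)]] by (simp add: h_def)
      then show ?thesis by simp
    qed
  qed
  then have "comm_time n E \<pi> + 1 \<le> 2 * sig r" using c1 c2 by simp
  moreover have "2 * sig r \<le> n^2 div 2"
  proof -
    have "(2 * sig r * 2) div 2 \<le> n^2 div 2" using med by (intro div_le_mono) simp
    then show ?thesis by simp
  qed
  ultimately show ?thesis by simp
qed

end



fun cst :: "(nat \<Rightarrow> nat \<Rightarrow> nat) \<Rightarrow> nat list \<Rightarrow> nat" where
  "cst dd [] = 0"
| "cst dd [x] = 0"
| "cst dd (x # y # zs) = dd x y + cst dd (y # zs)"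

lemma cst_append:
  "A \<noteq> [] \<Longrightarrow> B \<noteq> [] \<Longrightarrow> cst dd (A @ B) = cst dd A + dd (last A) (hd B) + cst dd B"
proof (induction A)
  case Nil then show ?case by simp
next
  case (Cons a A)
  show ?case
  proof (cases A)
    case Nil
    then show ?thesis using Cons.prems by (cases B) auto
  next
    case (Cons a' A')
    then show ?thesis using Cons.IH Cons.prems by simp
  qed
qed

lemma cst_nth: "cst dd L = (\<Sum>i<length L - 1. dd (L ! i) (L ! Suc i))"
proof (induction dd L rule: cst.induct)
  case (3 dd x y zs)
  have "(\<Sum>i<length (x # y # zs) - 1. dd ((x # y # zs) ! i) ((x # y # zs) ! Suc i))
      = dd x y + (\<Sum>i<length (y # zs) - 1. dd ((y # zs) ! i) ((y # zs) ! Suc i))"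
    by (simp add: sum.lessThan_Suc_shift del: sum.lessThan_Suc)
  then show ?case using 3 by simp
qed auto

lemma cst_split:
  "cst dd L \<le> length L - 1 \<or> (\<exists>A B. L = A @ B \<and> A \<noteq> [] \<and> B \<noteq> [] \<and> dd (last A) (hd B) \<ge> 2)"
proof (induction dd L rule: cst.induct)
  case (3 dd x y zs)
  show ?case
  proof (cases "dd x y \<ge> 2")
    case True
    then show ?thesis by (intro disjI2 exI[of _ "[x]"] exI[of _ "y # zs"]) simp
  next
    case False
    show ?thesis
    proof (cases "cst dd (y # zs) \<le> length (y # zs) - 1")
      case True
      then show ?thesis using False by simp
    next
      case F2: False
      then obtain A B where AB: "y # zs = A @ B" "A \<noteq> []" "B \<noteq> []" "dd (last A) (hd B) \<ge> 2"
        using 3 by blast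
      then show ?thesis by (intro disjI2 exI[of _ "x # A"] exI[of _ B]) auto
    qed
  qed
qed auto

lemma list_to_ord:
  assumes dM: "distinct M" and sM: "set M = {0..<n}"
  shows "\<exists>\<pi>\<in>orderings n. comm_time n E \<pi> = cst (gdist E) M"
proof -
  have lM: "length M = n" using distinct_card[OF dM] sM by simp
  have bn: "bij_betw ((!) M) {..<n} {0..<n}" using bij_betw_nth[OF dM] lM sM by simp
  define \<pi> where "\<pi> v = Suc (inv_into {..<n} ((!) M) v)" for v
  have b1: "bij_betw (inv_into {..<n} ((!) M)) {0..<n} {..<n}" by (rule bij_betw_inv_into[OF bn])
  have b2: "bij_betw Suc {..<n} {1..n}" by (auto simp: image_Suc_lessThan)
  have bp: "bij_betw \<pi> {0..<n} {1..n}"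
    unfolding \<pi>_def using bij_betw_trans[OF b1 b2] by (simp add: comp_def)
  then have po: "\<pi> \<in> orderings n" by (simp add: orderings_def)
  have inv: "inv_into {0..<n} \<pi> i = M ! (i - 1)" if i: "i \<in> {1..n}" for i
  proof (rule inv_into_f_eq)
    show "inj_on \<pi> {0..<n}" using bp by (simp add: bij_betw_def)
    show "M ! (i - 1) \<in> {0..<n}" using i lM sM nth_mem[of "i - 1" M] by auto
    have "inv_into {..<n} ((!) M) (M ! (i - 1)) = i - 1"
      using i bn by (intro inv_into_f_f) (auto simp: bij_betw_def)
    then show "\<pi> (M ! (i - 1)) = i" using i by (simp add: \<pi>_def)
  qed
  have "comm_time n E \<pi> = (\<Sum>i=1..n-1. gdist E (M ! (i - 1)) (M ! i))"
    unfolding comm_time_def by (intro sum.cong refl) (auto simp: inv)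
  also have "\<dots> = (\<Sum>i<n-1. gdist E (M ! i) (M ! Suc i))"
    by (simp add: sum.atLeast1_atMost_eq)
  also have "\<dots> = cst (gdist E) M" using cst_nth lM by simp
  finally show ?thesis using po by blast
qed

context cg begin

lemma build:
  assumes "card S = Suc k" "S \<subseteq> {0..<n}" "0 \<in> S"
    "\<forall>v\<in>S. v \<noteq> 0 \<longrightarrow> (\<exists>w\<in>S. E w v \<and> d 0 w < d 0 v)"
  shows "\<exists>L. distinct L \<and> set L = S \<and> L \<noteq> [] \<and> hd L = 0 \<and> cst d L + d (last L) (hd L) \<le> 2 * k"
  using assms
proof (induction k arbitrary: S)
  case 0
  have "card S = 1" using 0(1) by simp
  then obtain y where "S = {y}" by (rule card_1_singletonE)
  then have S0: "S = {0}" using 0(3) by simp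
  have "cst d [0] + d (last [0]) (hd [0]) \<le> 2 * 0" by (simp add: d_refl)
  then show ?case using S0 by (intro exI[of _ "[0]"]) simp
next
  case (Suc k)
  have fS: "finite S" using Suc.prems(1) by (intro card_ge_0_finite) simp
  have n0: "0 < n" using Suc.prems(2,3) by auto
  obtain v where v: "v \<in> S" "v \<noteq> 0"
  proof -
    have "S \<noteq> {0}" using Suc.prems(1) by auto
    then show ?thesis using that Suc.prems(3) by blast
  qed
  define M where "M = Max (d 0 ` S)"
  have "M \<in> d 0 ` S" unfolding M_def using fS Suc.prems(3) by (intro Max_in) auto
  then obtain x where x: "x \<in> S" "d 0 x = M" by auto
  have mx: "\<forall>y\<in>S. d 0 y \<le> d 0 x" using x fS unfolding M_def by simp
  have "v < n" using v Suc.prems(2) by auto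
  then have "d 0 v \<ge> 1" using d_pos[OF n0] v(2) by simp
  moreover have "d 0 v \<le> d 0 x" using mx v by blast
  ultimately have x0: "x \<noteq> 0" using d_refl[of 0] by (metis not_one_le_zero order_trans)
  define S' where "S' = S - {x}"
  have cS': "card S' = Suc k" using Suc.prems(1) x fS by (simp add: S'_def)
  have cl: "\<forall>v\<in>S'. v \<noteq> 0 \<longrightarrow> (\<exists>w\<in>S'. E w v \<and> d 0 w < d 0 v)"
  proof (intro ballI impI)
    fix y assume y: "y \<in> S'" "y \<noteq> 0"
    then obtain w where w: "w \<in> S" "E w y" "d 0 w < d 0 y" using Suc.prems(4) by (auto simp: S'_def)
    have "w \<noteq> x" using w mx y by (auto simp: S'_def)
    then show "\<exists>w\<in>S'. E w y \<and> d 0 w < d 0 y" using w by (auto simp: S'_def)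
  qed
  obtain L' where L': "distinct L'" "set L' = S'" "L' \<noteq> []" "hd L' = 0"
      "cst d L' + d (last L') (hd L') \<le> 2 * k"
  proof -
    have "S' \<subseteq> {0..<n}" "0 \<in> S'" using Suc.prems(2,3) x0 by (auto simp: S'_def)
    from Suc.IH[OF cS' this cl] show ?thesis using that by blast
  qed
  obtain p where p: "p \<in> S" "E p x" "d 0 p < d 0 x" using Suc.prems(4) x x0 by blast
  have pS': "p \<in> set L'" using p L'(2) by (auto simp: S'_def)
  obtain A B where AB: "L' = A @ p # B" using split_list[OF pS'] by blast
  define L where "L = A @ p # x # B"
  have xL': "x \<notin> set L'" using L'(2) by (simp add: S'_def)
  have dL: "distinct L" using L'(1) xL' AB by (auto simp: L_def)
  have sL: "set L = S" using L'(2) AB x by (auto simp: L_def S'_def)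
  have hL: "hd L = hd L'" using AB by (cases A) (auto simp: L_def)
  have Sn: "\<And>y. y \<in> S \<Longrightarrow> y < n" using Suc.prems(2) by auto
  have xn: "x < n" and pn: "p < n" using Sn x p by auto
  have h0n: "hd L' < n" using L'(4) n0 by simp
  have dpx: "d p x = 1" "d x p = 1" using d_edge1[OF p(2)] d_edge1[OF sym[OF p(2)]] by auto
  have cA: "cst d L = cst d (A @ [p]) + d p x + cst d (x # B)"
    using cst_append[of "A @ [p]" "x # B" d] by (simp add: L_def)
  have cA': "cst d L' = cst d (A @ [p]) + cst d (p # B) - d p p"
  proof (cases B)
    case Nil then show ?thesis by (simp add: AB d_refl)
  next
    case (Cons b B')
    then show ?thesis using cst_append[of "A @ [p]" "B" d] by (simp add: AB d_refl)
  qed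
  show ?case
  proof (cases B)
    case Nil
    have "d x (hd L') \<le> d x p + d p (hd L')" using d_tri xn pn h0n by blast
    moreover have "last L = x" "last L' = p" using Nil AB by (auto simp: L_def)
    moreover have "cst d L = cst d L' + 1" using cA cA' Nil dpx d_refl by simp
    ultimately have "cst d L + d (last L) (hd L) \<le> 2 * Suc k" using L'(5) dpx hL by simp
    moreover have "L \<noteq> []" "hd L = 0" using hL L'(4) by (simp_all add: L_def)
    ultimately show ?thesis using dL sL by blast
  next
    case (Cons b B')
    have bn: "b < n" using Sn L'(2) AB Cons by (auto simp: S'_def)
    have "d x b \<le> d x p + d p b" using d_tri xn pn bn by blast
    moreover have "last L = last L'" using Cons AB by (auto simp: L_def)
    moreover have "cst d L = cst d (A @ [p]) + d p x + d x b + cst d (b # B')" using cA Cons by simp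
    moreover have "cst d L' = cst d (A @ [p]) + d p b + cst d (b # B')" using cA' Cons d_refl by simp
    ultimately have "cst d L + d (last L) (hd L) \<le> 2 * Suc k" using L'(5) dpx hL by simp
    moreover have "L \<noteq> []" "hd L = 0" using hL L'(4) by (simp_all add: L_def)
    ultimately show ?thesis using dL sL by blast
  qed
qed

lemma Tmin_bound:
  assumes n3: "n \<ge> 3"
  shows "\<exists>\<pi>\<in>orderings n. comm_time n E \<pi> \<le> 2 * n - 4"
proof -
  have cl: "\<forall>v\<in>{0..<n}. v \<noteq> 0 \<longrightarrow> (\<exists>w\<in>{0..<n}. E w v \<and> d 0 w < d 0 v)"
  proof (intro ballI impI)
    fix v assume v: "v \<in> {0..<n}" "v \<noteq> 0"
    then have "d 0 v \<ge> 1" using d_pos[of 0 v] by auto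
    then obtain k where k: "d 0 v = Suc k" by (cases "d 0 v") auto
    then obtain w where "w < n" "E w v" "d 0 w = k" using d_pred[of 0 v k] v by auto
    then show "\<exists>w\<in>{0..<n}. E w v \<and> d 0 w < d 0 v" using k by auto
  qed
  obtain L where L: "distinct L" "set L = {0..<n}" "L \<noteq> []" "hd L = 0"
      "cst d L + d (last L) (hd L) \<le> 2 * (n - 1)"
    using build[of "{0..<n}" "n - 1"] cl n3 by auto
  have lL: "length L = n" using distinct_card[OF L(1)] L(2) by simp
  have "\<exists>M. distinct M \<and> set M = {0..<n} \<and> cst d M \<le> 2 * n - 4"
  proof (cases "cst d L \<le> length L - 1")
    case True
    then show ?thesis using L lL n3 by (intro exI[of _ L]) auto
  next
    case False
    then obtain A B where AB: "L = A @ B" "A \<noteq> []" "B \<noteq> []" "d (last A) (hd B) \<ge> 2"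
      using cst_split[of d L] by blast
    have c1: "cst d L = cst d A + d (last A) (hd B) + cst d B" using cst_append AB by simp
    have c2: "cst d (B @ A) = cst d B + d (last B) (hd A) + cst d A" using cst_append AB by simp
    have "last B = last L" "hd A = hd L" using AB by auto
    then have "cst d (B @ A) \<le> 2 * n - 4" using c1 c2 L(5) AB(4) n3 by simp
    moreover have "distinct (B @ A)" "set (B @ A) = {0..<n}" using L AB by auto
    ultimately show ?thesis by blast
  qed
  then obtain M where M: "distinct M" "set M = {0..<n}" "cst d M \<le> 2 * n - 4" by blast
  obtain \<pi> where "\<pi> \<in> orderings n" "comm_time n E \<pi> = cst d M" using list_to_ord[OF M(1,2), of E] by blast
  then show ?thesis using M(3) by (intro bexI[of _ \<pi>]) simp_all
qed

end



lemma walk3: "E a b \<Longrightarrow> E b c \<Longrightarrow> is_walk E [a, b, c] a c"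
  using walk_append[OF walk_edge[of E a b] walk_edge[of E b c]] by simp

context cg begin

lemma d_one_edge: assumes "u < n" "v < n" "d u v = 1" shows "E u v"
proof -
  obtain xs where xs: "is_walk E xs u v" "length xs = 2" using short_walk[OF assms(1,2)] assms(3) by auto
  then obtain a b where ab: "xs = [a, b]" by (cases xs; cases "tl xs") auto
  then show ?thesis using xs(1) unfolding is_walk_def by auto
qed

lemma comm_bound_all:
  assumes "n \<ge> 2"
  shows "comm_time n E ` orderings n \<subseteq> {..n^2 div 2 - 1}"
  using Tmax_bound[OF assms] by auto

lemma fin_img: "n \<ge> 2 \<Longrightarrow> finite (comm_time n E ` orderings n)"
  using comm_bound_all finite_subset by blast

end

lemma orderings_ne: "Suc \<in> orderings n"
  by (auto simp: orderings_def image_Suc_atLeastLessThan)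

lemma conn_graphs_finite: "finite (conn_graphs n)"
proof -
  have "conn_graphs n \<subseteq> (\<lambda>R u v. (u, v) \<in> R) ` Pow ({0..<n} \<times> {0..<n})"
  proof
    fix E assume "E \<in> conn_graphs n"
    then have b: "\<And>u v. E u v \<Longrightarrow> u < n \<and> v < n" by (auto simp: conn_graphs_def simple_graph_def)
    have "E = (\<lambda>u v. (u, v) \<in> {(u, v). u < n \<and> v < n \<and> E u v})" using b by (auto intro!: ext)
    moreover have "{(u, v). u < n \<and> v < n \<and> E u v} \<in> Pow ({0..<n} \<times> {0..<n})" by auto
    ultimately show "E \<in> (\<lambda>R u v. (u, v) \<in> R) ` Pow ({0..<n} \<times> {0..<n})" by blast
  qed
  then show ?thesis by (rule finite_subset) simp
qed

section \<open>Star\<close>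

definition star :: "nat \<Rightarrow> nat \<Rightarrow> nat \<Rightarrow> bool" where
  "star n u v \<longleftrightarrow> u < n \<and> v < n \<and> u \<noteq> v \<and> (u = 0 \<or> v = 0)"

lemma star_cg: assumes "n \<ge> 1" shows "cg n (star n)"
proof
  show "simple_graph n (star n)" by (auto simp: simple_graph_def star_def)
  show "connected_graph n (star n)" unfolding connected_graph_def
  proof (intro allI impI)
    fix u v assume uv: "u < n" "v < n"
    show "\<exists>xs. is_walk (star n) xs u v"
    proof (cases "u = v")
      case True then show ?thesis using walk_single by blast
    next
      case False
      show ?thesis
      proof (cases "u = 0 \<or> v = 0")
        case True
        then have "star n u v" using False uv by (auto simp: star_def)
        then show ?thesis using walk_edge by blast
      next
        case F2: False
        have "star n u 0" "star n 0 v" using F2 uv by (auto simp: star_def)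
        then show ?thesis using walk3 by blast
      qed
    qed
  qed
qed

lemma star_lower:
  assumes n3: "n \<ge> 3" and p: "\<pi> \<in> orderings n"
  shows "2 * n - 4 \<le> comm_time n (star n) \<pi>"
proof -
  interpret cg n "star n" using star_cg n3 by simp
  define s where "s = inv_into {0..<n} \<pi>"
  have bs: "bij_betw s {1..n} {0..<n}" unfolding s_def by (rule ord_s[OF p])
  have sn: "s i < n" if "i \<in> {1..n}" for i using bs that by (auto simp: bij_betw_def)
  have inj: "inj_on s {1..n}" using bs by (simp add: bij_betw_def)
  have "0 \<in> s ` {1..n}" using bs n3 by (auto simp: bij_betw_def)
  then obtain i0 where i0: "i0 \<in> {1..n}" "s i0 = 0" by auto
  define f where "f i = (if i = i0 then 1 else 0 :: nat)" for i
  define g where "g i = (if i = i0 - 1 then 1 else 0 :: nat)" for i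
  have pt: "2 \<le> d (s i) (s (i+1)) + f i + g i" if i: "i \<in> {1..n-1}" for i
  proof -
    have a: "i \<in> {1..n}" "i + 1 \<in> {1..n}" using i by auto
    have ne: "s i \<noteq> s (i+1)" using inj a by (auto dest: inj_onD)
    have d1: "d (s i) (s (i+1)) \<ge> 1" using d_pos sn a ne by blast
    show ?thesis
    proof (cases "s i = 0 \<or> s (i+1) = 0")
      case True
      have "i = i0 \<or> i + 1 = i0"
      proof (cases "s i = 0")
        case True
        then show ?thesis using inj_onD[OF inj _ a(1) i0(1)] i0(2) by simp
      next
        case False
        then have "s (i+1) = 0" using \<open>s i = 0 \<or> s (i+1) = 0\<close> by simp
        then show ?thesis using inj_onD[OF inj _ a(2) i0(1)] i0(2) by simp
      qed
      then have "f i + g i \<ge> 1" by (auto simp: f_def g_def)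
      then show ?thesis using d1 by simp
    next
      case False
      have "d (s i) (s (i+1)) \<noteq> 1"
      proof
        assume "d (s i) (s (i+1)) = 1"
        then have "star n (s i) (s (i+1))" using d_one_edge sn a by blast
        then show False using False by (simp add: star_def)
      qed
      then show ?thesis using d1 by simp
    qed
  qed
  have "2 * (n - 1) = (\<Sum>i=1..n-1. 2::nat)" by simp
  also have "\<dots> \<le> (\<Sum>i=1..n-1. d (s i) (s (i+1)) + f i + g i)" using pt by (intro sum_mono)
  also have "\<dots> = (\<Sum>i=1..n-1. d (s i) (s (i+1))) + (\<Sum>i=1..n-1. f i) + (\<Sum>i=1..n-1. g i)"
    by (simp add: sum.distrib)
  also have "(\<Sum>i=1..n-1. f i) \<le> 1" unfolding f_def by (simp add: sum.delta)
  also have "(\<Sum>i=1..n-1. g i) \<le> 1" unfolding g_def by (simp add: sum.delta)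
  finally have "2 * (n - 1) \<le> comm_time n (star n) \<pi> + 2"
    by (simp add: comm_time_def s_def)
  then show ?thesis by simp
qed

section \<open>Path\<close>

definition pth :: "nat \<Rightarrow> nat \<Rightarrow> nat \<Rightarrow> bool" where
  "pth n u v \<longleftrightarrow> u < n \<and> v < n \<and> (v = Suc u \<or> u = Suc v)"

lemma upt_walk: assumes "u \<le> v" "v < n" shows "is_walk (pth n) [u..<Suc v] u v"
proof -
  have nt: "[u..<Suc v] ! i = u + i" if "i < Suc v - u" for i using that by (simp del: upt_Suc)
  have "pth n ([u..<Suc v] ! i) ([u..<Suc v] ! Suc i)" if "Suc i < length [u..<Suc v]" for i
    using that nt[of i] nt[of "Suc i"] assms by (simp add: pth_def del: upt_Suc; linarith)
  moreover have "hd [u..<Suc v] = u" using assms by (simp add: hd_upt del: upt_Suc)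
  moreover have "last [u..<Suc v] = v" using assms by (simp add: last_upt del: upt_Suc)
  moreover have "[u..<Suc v] \<noteq> []" using assms by (simp del: upt_Suc)
  ultimately show ?thesis by (simp add: is_walk_def del: upt_Suc)
qed

lemma path_cg: "cg n (pth n)"
proof
  show "simple_graph n (pth n)" by (auto simp: simple_graph_def pth_def)
  show "connected_graph n (pth n)" unfolding connected_graph_def
  proof (intro allI impI)
    fix u v assume uv: "u < n" "v < n"
    show "\<exists>xs. is_walk (pth n) xs u v"
    proof (cases "u \<le> v")
      case True then show ?thesis using upt_walk uv by blast
    next
      case False
      then have "is_walk (pth n) [v..<Suc u] v u" using upt_walk uv by simp
      then have "is_walk (pth n) (rev [v..<Suc u]) u v"
        by (rule walk_rev[rotated]) (auto simp: pth_def)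
      then show ?thesis by blast
    qed
  qed
qed

definition ad :: "nat \<Rightarrow> nat \<Rightarrow> nat" where
  "ad a b = (if a \<le> b then b - a else a - b)"

lemma path_walk_spread:
  assumes "is_walk (pth n) xs a b" "i < length xs"
  shows "int (xs ! i) - int (xs ! 0) \<le> int i \<and> int (xs ! 0) - int (xs ! i) \<le> int i"
  using assms(2)
proof (induction i)
  case 0 then show ?case by simp
next
  case (Suc i)
  have "pth n (xs ! i) (xs ! Suc i)" using assms(1) Suc.prems by (auto simp: is_walk_def)
  then show ?case using Suc by (auto simp: pth_def)
qed

lemma path_dist: assumes "u < n" "v < n" shows "ad u v \<le> gdist (pth n) u v"
proof -
  interpret cg n "pth n" by (rule path_cg)
  obtain xs where xs: "is_walk (pth n) xs u v" "length xs = Suc (d u v)" using short_walk assms by blast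
  have ne: "xs \<noteq> []" using xs by (simp add: is_walk_def)
  have "xs ! 0 = u" using xs ne by (auto simp: is_walk_def hd_conv_nth)
  moreover have "xs ! (length xs - 1) = v" using xs ne by (auto simp: is_walk_def last_conv_nth)
  then have "xs ! (d u v) = v" using xs(2) by simp
  ultimately show ?thesis using path_walk_spread[OF xs(1), of "d u v"] xs(2) by (auto simp: ad_def)
qed

lemma cst_mono:
  "(\<forall>x\<in>set L. \<forall>y\<in>set L. dd1 x y \<le> dd2 x y) \<Longrightarrow> cst dd1 L \<le> cst dd2 L"
  by (induction dd1 L rule: cst.induct) (auto intro: add_mono)

definition P :: "nat \<Rightarrow> nat \<Rightarrow> nat list" where
  "P c k = concat (map (\<lambda>j. [c + j, j]) [0..<k])"

lemma P_Suc: "P c (Suc k) = P c k @ [c + k, k]"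
  by (simp add: P_def)

lemma P_cost: "k \<ge> 1 \<Longrightarrow> cst ad (P c k) = k * c + (k - 1) * (c + 1) \<and> P c k \<noteq> [] \<and> last (P c k) = k - 1"
proof (induction k)
  case 0 then show ?case by simp
next
  case (Suc k)
  show ?case
  proof (cases "k = 0")
    case True then show ?thesis by (simp add: P_def ad_def)
  next
    case False
    then have ih: "cst ad (P c k) = k * c + (k - 1) * (c + 1)" "P c k \<noteq> []" "last (P c k) = k - 1"
      using Suc by auto
    have a1: "ad (k - 1) (c + k) = c + 1" using False by (simp add: ad_def)
    have a2: "cst ad [c + k, k] = c" by (simp add: ad_def)
    have "cst ad (P c (Suc k)) = cst ad (P c k) + ad (k - 1) (c + k) + cst ad [c + k, k]"
      unfolding P_Suc using cst_append[OF ih(2), of "[c + k, k]" ad] ih(3) by simp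
    also have "\<dots> = k * c + (k - 1) * (c + 1) + (c + 1) + c" using ih(1) a1 a2 by simp
    also have "\<dots> = Suc k * c + (Suc k - 1) * (c + 1)" using False by (cases k) (auto simp: algebra_simps)
    finally show ?thesis by (simp add: P_Suc)
  qed
qed

lemma P_0: "P c 0 = []" by (simp add: P_def)

lemma P_set: "set (P c k) = {0..<k} \<union> {c..<c+k}"
  by (induction k) (auto simp: P_Suc P_0)

lemma P_distinct: "k \<le> c \<Longrightarrow> 0 < c \<Longrightarrow> distinct (P c k)"
  by (induction k) (auto simp: P_Suc P_set P_0)

lemma path_list:
  assumes n3: "n \<ge> 3"
  shows "\<exists>L. distinct L \<and> set L = {0..<n} \<and> cst ad L = n^2 div 2 - 1"
proof (cases "even n")
  case True
  then obtain m where m: "n = 2 * m" by blast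
  have m1: "m \<ge> 1" using m n3 by simp
  have "cst ad (P m m) = m * m + (m - 1) * (m + 1)" using P_cost[OF m1] by simp
  also have "\<dots> = n^2 div 2 - 1" using m1 m by (cases m) (auto simp: power2_eq_square algebra_simps)
  finally have "cst ad (P m m) = n^2 div 2 - 1" .
  moreover have "set (P m m) = {0..<n}" using m by (auto simp: P_set)
  moreover have "distinct (P m m)" using m1 by (intro P_distinct) auto
  ultimately show ?thesis by blast
next
  case False
  then obtain m where m: "n = 2 * m + 1" using oddE by blast
  have m1: "m \<ge> 1" using m n3 by simp
  define L where "L = P (m + 1) m @ [m]"
  have pc: "cst ad (P (m+1) m) = m * (m+1) + (m - 1) * (m + 2)" "P (m+1) m \<noteq> []" "last (P (m+1) m) = m - 1"
    using P_cost[OF m1, of "m+1"] by auto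
  have "cst ad L = cst ad (P (m+1) m) + ad (m - 1) m"
    unfolding L_def using cst_append[OF pc(2), of "[m]" ad] pc(3) by simp
  also have "\<dots> = m * (m+1) + (m - 1) * (m + 2) + 1" using pc(1) m1 by (simp add: ad_def)
  also have "\<dots> = n^2 div 2 - 1"
  proof -
    obtain k where k: "m = Suc k" using m1 by (cases m) auto
    have "n^2 = 2 * (2 * m * m + 2 * m) + 1" using m by (simp add: power2_eq_square algebra_simps)
    then have "n^2 div 2 = 2 * m * m + 2 * m" by simp
    then show ?thesis using k by (simp add: algebra_simps)
  qed
  finally have "cst ad L = n^2 div 2 - 1" .
  moreover have "set L = {0..<n}" using m by (auto simp: L_def P_set)
  moreover have "distinct L" using m1 by (auto simp: L_def P_set intro: P_distinct)
  ultimately show ?thesis by blast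
qed

lemma path_lower:
  assumes n3: "n \<ge> 3"
  shows "\<exists>\<pi>\<in>orderings n. n^2 div 2 - 1 \<le> comm_time n (pth n) \<pi>"
proof -
  obtain L where L: "distinct L" "set L = {0..<n}" "cst ad L = n^2 div 2 - 1" using path_list[OF n3] by blast
  obtain \<pi> where pi: "\<pi> \<in> orderings n" "comm_time n (pth n) \<pi> = cst (gdist (pth n)) L"
    using list_to_ord[OF L(1,2), of "pth n"] by blast
  have "cst ad L \<le> cst (gdist (pth n)) L" using L(2) path_dist by (intro cst_mono) auto
  then show ?thesis using pi L(3) by (intro bexI[of _ \<pi>]) simp_all
qed




theorem theorem1:
  fixes n :: nat
  assumes "n \<ge> 3"
  shows "Max (T_min n ` conn_graphs n) = 2 * n - 4
       \<and> Max (T_max n ` conn_graphs n) = n ^ 2 div 2 - 1"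
proof -
  have n2: "n \<ge> 2" using assms by simp
  have cgE: "cg n E" if "E \<in> conn_graphs n" for E
    using that by (auto simp: conn_graphs_def cg_def)
  have fin: "finite (comm_time n E ` orderings n)" if "E \<in> conn_graphs n" for E
    using cg.fin_img[OF cgE[OF that] n2] .
  have ne: "comm_time n E ` orderings n \<noteq> {}" for E using orderings_ne by blast
  have star_in: "star n \<in> conn_graphs n" using star_cg[of n] assms
    by (simp add: conn_graphs_def cg_def)
  have path_in: "pth n \<in> conn_graphs n" using path_cg[of n] by (simp add: conn_graphs_def cg_def)
  have finG: "finite (conn_graphs n)" by (rule conn_graphs_finite)
  have Tmin_le: "T_min n E \<le> 2 * n - 4" if E: "E \<in> conn_graphs n" for E
  proof -
    obtain \<pi> where "\<pi> \<in> orderings n" "comm_time n E \<pi> \<le> 2 * n - 4"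
      using cg.Tmin_bound[OF cgE[OF E] assms] by blast
    then show ?thesis unfolding T_min_def using fin[OF E] by (meson Min_le image_eqI order_trans)
  qed
  have Tmin_star: "2 * n - 4 \<le> T_min n (star n)"
    unfolding T_min_def using fin[OF star_in] ne star_lower[OF assms] by (auto intro!: Min.boundedI)
  have Tmax_le: "T_max n E \<le> n^2 div 2 - 1" if E: "E \<in> conn_graphs n" for E
    unfolding T_max_def using fin[OF E] ne cg.Tmax_bound[OF cgE[OF E] n2] by (auto intro!: Max.boundedI)
  have Tmax_path: "n^2 div 2 - 1 \<le> T_max n (pth n)"
  proof -
    obtain \<pi> where "\<pi> \<in> orderings n" "n^2 div 2 - 1 \<le> comm_time n (pth n) \<pi>"
      using path_lower[OF assms] by blast
    then show ?thesis unfolding T_max_def using fin[OF path_in] by (meson Max_ge image_eqI order_trans)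
  qed
  have A: "Max (T_min n ` conn_graphs n) = 2 * n - 4"
  proof (rule antisym)
    show "Max (T_min n ` conn_graphs n) \<le> 2 * n - 4"
      using finG star_in Tmin_le by (auto intro!: Max.boundedI)
    show "2 * n - 4 \<le> Max (T_min n ` conn_graphs n)"
      using finG star_in Tmin_star by (meson Max_ge finite_imageI image_eqI order_trans)
  qed
  have B: "Max (T_max n ` conn_graphs n) = n^2 div 2 - 1"
  proof (rule antisym)
    show "Max (T_max n ` conn_graphs n) \<le> n^2 div 2 - 1"
      using finG path_in Tmax_le by (auto intro!: Max.boundedI)
    show "n^2 div 2 - 1 \<le> Max (T_max n ` conn_graphs n)"
      using finG path_in Tmax_path by (meson Max_ge finite_imageI image_eqI order_trans)
  qed
  show ?thesis using A B by simp
qed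



end
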